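(* Let $a$ be a primitive element of $GF(2^m)$, $n\le 2^m-1$, and $1\le k\le d\le n-1$. Let $g(x)=\prod_{j=1}^{n-k}(x-a^j)=\sum_{i=0}^{n-k}g_ix^i$ and $f(x)=\prod_{j=1}^{n-d}(x-a^j)=\sum_{i=0}^{n-d}f_ix^i$. Let $G_k$ be the $k\times n$ matrix whose $r$-th row ($r=1,\dots,k$) is $(0,\dots,0,g_0,g_1,\dots,g_{n-k},0,\dots,0)$ with $r-1$ leading zeros, and let $B$ be the $(d-k)\times n$ matrix whose $r$-th row ($r=1,\dots,d-k$) is $(0,\dots,0,f_0,f_1,\dots,f_{n-d},0,\dots,0)$ with $r-1$ leading zeros. Then the $d\times n$ matrix $G=\begin{bmatrix}G_k\\ B\end{bmatrix}$ has rank $d$; that is, it is a generator matrix of the $[n,d]$ Reed–Solomon code generated by $f(x)$ (the code underlying the minimum-bandwidth regenerating code).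
   Context: The $[n,d]$ Reed–Solomon code generated by $f(x)$ consists of all vectors $(c_0,\dots,c_{n-1})\in GF(2^m)^n$ whose polynomial $\sum_i c_ix^i$ is divisible by $f(x)$. *)

theory Defs
  imports "Jordan_Normal_Form.DL_Rank" "HOL-Computational_Algebra.Polynomial"
begin

definition primitive_element :: "'a::{field,finite} \<Rightarrow> bool" where
  "primitive_element a \<longleftrightarrow> a \<noteq> 0 \<and> (\<forall>x. x \<noteq> 0 \<longrightarrow> (\<exists>i::nat. x = a ^ i))"

definition shift_mat :: "'a::zero poly \<Rightarrow> nat \<Rightarrow> nat \<Rightarrow> 'a mat" where
  "shift_mat p r n = mat r n (\<lambda>(i, j). if i \<le> j then coeff p (j - i) else 0)"

definition vec_poly :: "'a::comm_semiring_1 vec \<Rightarrow> 'a poly" where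
  "vec_poly c = (\<Sum>i<dim_vec c. monom (c $ i) i)"

definition RS_code :: "nat \<Rightarrow> 'a::field poly \<Rightarrow> 'a vec set" where
  "RS_code n f = {c \<in> carrier_vec n. f dvd vec_poly c}"

end

theory Submission
  imports Defs
begin

lemma (in vec_space) rank_le_nr:
  assumes "A \<in> carrier_mat n nc"
  shows "rank A \<le> n"
proof -
  have "set (cols A) \<subseteq> carrier_vec n" using cols_dim assms(1) by blast
  then have "subspace class_ring (span (set (cols A))) V"
    using span_is_subspace by simp
  from subspace_dim[OF this fin_dim fin_dim_span_cols[OF assms]]
  show ?thesis unfolding rank_def dim_is_n by simp
qed

lemma coeff_vec_poly: "coeff (vec_poly c) j = (if j < dim_vec c then c $ j else 0)"
  unfolding vec_poly_def by (simp add: coeff_sum)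

lemma coeff_monom1_mult: "coeff (monom 1 r * (p :: 'a :: comm_semiring_1 poly)) j = (if r \<le> j then coeff p (j - r) else 0)"
  by (simp add: coeff_monom_mult)

lemma main:
  fixes f h :: "'a::field poly"
  assumes mf: "lead_coeff f = 1" and mh: "lead_coeff h = 1" and df: "degree f = n - d" and dh: "degree h = d - k"
    and k1: "1 \<le> k" and kd: "k \<le> d" and dn: "d < n"
  defines "g \<equiv> f * h"
  defines "G \<equiv> shift_mat g k n @\<^sub>r shift_mat f (d - k) n"
  shows "vec_space.rank d G = d \<and> vec_space.row_space n G = RS_code n f"
proof -
  have f0: "f \<noteq> 0" and h0: "h \<noteq> 0" using mf mh by auto
  have dg: "degree g = n - k" unfolding g_def using f0 h0 df dh kd dn by (simp add: degree_mult_eq)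
  have mg: "lead_coeff g = 1" unfolding g_def using mf mh by (simp add: lead_coeff_mult)
  have g0: "g \<noteq> 0" using mg by auto
  define rp where "rp r = (if r < k then monom 1 r * g else monom 1 (r - k) * f)" for r
  have drp: "degree (rp r) = (if r < k then r + (n - k) else r - k + (n - d))" for r
    unfolding rp_def using f0 g0 dg df mg mf by (simp add: degree_mult_eq degree_monom_eq)
  have lrp: "lead_coeff (rp r) = 1" for r
    unfolding rp_def using mg mf by (simp add: lead_coeff_mult degree_monom_eq)
  have drpn: "degree (rp r) < n" if "r < d" for r
    using drp[of r] that kd dn by auto
  have Gcar: "G \<in> carrier_mat d n"
  proof -
    have "G \<in> carrier_mat (k + (d - k)) n" unfolding G_def
      by (rule carrier_append_rows) (auto simp: shift_mat_def)
    then show ?thesis using kd by simp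
  qed
  have Geq: "G $$ (r, j) = coeff (rp r) j" if "r < d" "j < n" for r j
    using that kd unfolding G_def append_rows_def four_block_mat_def shift_mat_def rp_def
    by (auto simp: coeff_monom1_mult Let_def)

  have Gr: "dim_row G = d" "dim_col G = n" using Gcar by auto
  define P where "P y = (\<Sum>r<d. Polynomial.smult (y $ r) (rp r))" for y :: "'a vec"
  have cP: "coeff (P y) j = (\<Sum>r<d. y $ r * coeff (rp r) j)" for y j
    by (simp add: P_def coeff_sum)
  have GTy: "(G\<^sup>T *\<^sub>v y) $ j = coeff (P y) j" if y: "y \<in> carrier_vec d" and j: "j < n" for y j
  proof -
    have "(G\<^sup>T *\<^sub>v y) $ j = (\<Sum>r<d. G $$ (r, j) * y $ r)"
      using y j Gr by (simp add: scalar_prod_def lessThan_atLeast0)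
    also have "\<dots> = coeff (P y) j" unfolding cP
      by (rule sum.cong, simp, simp add: Geq j mult.commute)
    finally show ?thesis .
  qed
  have Phi: "coeff (P y) j = 0" if "n \<le> j" for y j
  proof -
    have "coeff (rp r) j = 0" if "r < d" for r using drpn[OF that] \<open>n \<le> j\<close> by (intro coeff_eq_0) linarith
    then show ?thesis unfolding cP by (intro sum.neutral) auto
  qed
  have vpP: "vec_poly (G\<^sup>T *\<^sub>v y) = P y" if y: "y \<in> carrier_vec d" for y
    by (rule poly_eqI, use Gr y GTy Phi in \<open>auto simp: coeff_vec_poly\<close>)
  have fdvd: "f dvd rp r" for r unfolding rp_def g_def by auto
  have fP: "f dvd P y" for y unfolding P_def
    by (rule dvd_sum, rule dvd_smult, rule fdvd)
  have rs: "vec_space.row_space n G = {w \<in> carrier_vec n. \<exists>y\<in>carrier_vec d. G\<^sup>T *\<^sub>v y = w}"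
    using vec_space.row_space_eq[OF Gcar] Gr by auto
  have RS: "vec_space.row_space n G = RS_code n f"
  proof (intro Set.set_eqI iffI)
    fix w assume "w \<in> vec_space.row_space n G"
    then obtain y where w: "w \<in> carrier_vec n" and y: "y \<in> carrier_vec d" and wy: "G\<^sup>T *\<^sub>v y = w"
      unfolding rs by auto
    show "w \<in> RS_code n f" unfolding RS_code_def using w fP[of y] vpP[OF y] wy by auto
  next
    fix c assume "c \<in> RS_code n f"
    then have c: "c \<in> carrier_vec n" and fc: "f dvd vec_poly c" unfolding RS_code_def by auto
    then obtain q where vc: "vec_poly c = f * q" by (auto elim: dvdE)
    have "degree (vec_poly c) \<le> n - 1"
      by (rule degree_le, use c in \<open>auto simp: coeff_vec_poly\<close>)
    then have dq: "degree q \<le> d - 1"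
    proof (cases "q = 0")
      case False
      then have "degree (vec_poly c) = (n - d) + degree q" unfolding vc using f0 df by (simp add: degree_mult_eq)
      then show ?thesis using \<open>degree (vec_poly c) \<le> n - 1\<close> dn by linarith
    qed simp
    define u where "u = q div h"
    define v where "v = q mod h"
    have quv: "q = u * h + v" unfolding u_def v_def by simp
    have cv: "coeff v s = 0" if "d - k \<le> s" for s
    proof (cases "v = 0")
      case False
      then have "degree v < d - k" using degree_mod_less'[OF h0] dh unfolding v_def by auto
      then show ?thesis using that by (auto intro: coeff_eq_0)
    qed simp
    have dv: "degree v \<le> d - 1"
    proof (cases "v = 0")
      case False
      then have "degree v < d - k" using degree_mod_less'[OF h0] dh unfolding v_def by auto
      then show ?thesis by linarith
    qed simp
    have cu: "coeff u r = 0" if "k \<le> r" for r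
    proof (cases "u = 0")
      case False
      have "degree (u * h) = degree u + (d - k)" using False h0 dh by (simp add: degree_mult_eq)
      moreover have "u * h = q - v" using quv by simp
      moreover have "degree (q - v) \<le> d - 1" using degree_diff_le_max[of q v] dq dv by linarith
      ultimately have "degree u + (d - k) \<le> d - 1" by simp
      then have "degree u < k" using k1 kd by linarith
      then show ?thesis using that by (auto intro: coeff_eq_0)
    qed simp
    define y where "y = vec d (\<lambda>r. if r < k then coeff u r else coeff v (r - k))"
    have y: "y \<in> carrier_vec d" unfolding y_def by simp
    have split: "{..<d} = {..<k} \<union> {k..<d}" using kd by auto
    have "P y = (\<Sum>r<k. Polynomial.smult (y $ r) (rp r)) + (\<Sum>r\<in>{k..<d}. Polynomial.smult (y $ r) (rp r))"
      unfolding P_def split by (rule sum.union_disjoint) auto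
    also have "(\<Sum>r<k. Polynomial.smult (y $ r) (rp r)) = (\<Sum>r<k. monom (coeff u r) r) * g"
      unfolding sum_distrib_right using kd
      by (intro sum.cong) (auto simp: y_def rp_def smult_monom_mult)
    also have "(\<Sum>r<k. monom (coeff u r) r) = u"
    proof -
      have "(\<Sum>r<k. monom (coeff u r) r) = (\<Sum>r\<le>degree u + k. monom (coeff u r) r)"
        by (rule sum.mono_neutral_left) (auto simp: cu)
      also have "\<dots> = u" by (rule poly_as_sum_of_monoms') simp
      finally show ?thesis .
    qed
    also have "(\<Sum>r\<in>{k..<d}. Polynomial.smult (y $ r) (rp r)) = (\<Sum>s<d-k. Polynomial.smult (y $ (s + k)) (rp (s + k)))"
    proof -
      have "{k..<d} = (\<lambda>s. s + k) ` {..<d-k}"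
      proof
        show "(\<lambda>s. s + k) ` {..<d-k} \<subseteq> {k..<d}" by auto
        show "{k..<d} \<subseteq> (\<lambda>s. s + k) ` {..<d-k}"
        proof
          fix x assume "x \<in> {k..<d}"
          then have "x - k \<in> {..<d-k}" "x = (x - k) + k" by auto
          then show "x \<in> (\<lambda>s. s + k) ` {..<d-k}" by (rule rev_image_eqI)
        qed
      qed
      then show ?thesis by (simp add: sum.reindex)
    qed
    also have "\<dots> = (\<Sum>s<d-k. monom (coeff v s) s) * f"
      unfolding sum_distrib_right
      by (intro sum.cong) (auto simp: y_def rp_def smult_monom_mult)
    also have "(\<Sum>s<d-k. monom (coeff v s) s) = v"
    proof -
      have "(\<Sum>r<d-k. monom (coeff v r) r) = (\<Sum>r\<le>degree v + (d-k). monom (coeff v r) r)"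
        by (rule sum.mono_neutral_left) (auto simp: cv)
      also have "\<dots> = v" by (rule poly_as_sum_of_monoms') simp
      finally show ?thesis .
    qed
    finally have "P y = vec_poly c" unfolding vc quv g_def by (simp add: algebra_simps)
    then have eq: "vec_poly (G\<^sup>T *\<^sub>v y) = vec_poly c" using vpP[OF y] by simp
    have "G\<^sup>T *\<^sub>v y = c"
    proof (rule eq_vecI)
      show "dim_vec (G\<^sup>T *\<^sub>v y) = dim_vec c" using c Gr by simp
      fix j assume "j < dim_vec c"
      then show "(G\<^sup>T *\<^sub>v y) $ j = c $ j"
        using arg_cong[OF eq, of "\<lambda>p. coeff p j"] c Gr by (simp add: coeff_vec_poly)
    qed
    then show "c \<in> vec_space.row_space n G" unfolding rs using c y by auto
  qed

  define M where "M = mat d d (\<lambda>(r, c). G $$ (r, n - d + c))"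
  have Mcar: "M \<in> carrier_mat d d" unfolding M_def by simp
  have Me: "M $$ (r, c) = coeff (rp r) (n - d + c)" if "r < d" "c < d" for r c
    unfolding M_def using that dn by (simp add: Geq)
  define \<sigma> where "\<sigma> r = degree (rp r) - (n - d)" for r
  have ds: "degree (rp r) = n - d + \<sigma> r" if "r < d" for r
    unfolding \<sigma>_def using drp[of r] that kd dn by auto
  have surj: "\<exists>r<d. \<sigma> r = c" if "c < d" for c
  proof (cases "d - k \<le> c")
    case True
    have "c - (d - k) < d" using that kd by linarith
    moreover have "\<sigma> (c - (d - k)) = c"
      unfolding \<sigma>_def using drp[of "c - (d - k)"] True that kd dn k1 by auto
    ultimately show ?thesis by blast
  next
    case False
    have "k + c < d" using False that kd by linarith
    moreover have "\<sigma> (k + c) = c"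
      unfolding \<sigma>_def using drp[of "k + c"] that kd dn k1 by auto
    ultimately show ?thesis by blast
  qed
  have inj: "v = 0\<^sub>v d" if v: "v \<in> carrier_vec d" and Mv: "M *\<^sub>v v = 0\<^sub>v d" for v
  proof (rule ccontr)
    assume "v \<noteq> 0\<^sub>v d"
    then obtain i where i: "i < d" "v $ i \<noteq> 0" using v by (metis eq_vecI carrier_vecD index_zero_vec)
    define c0 where "c0 = (LEAST c. v $ c \<noteq> 0)"
    have c0: "v $ c0 \<noteq> 0" unfolding c0_def using i(2) by (rule LeastI)
    have c0i: "c0 \<le> i" unfolding c0_def using i(2) by (rule Least_le)
    have below: "v $ c = 0" if "c < c0" for c using not_less_Least[OF that[unfolded c0_def]] by simp
    obtain r where r: "r < d" "\<sigma> r = c0" using surj c0i i by (meson le_less_trans)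
    have "(M *\<^sub>v v) $ r = (\<Sum>c<d. M $$ (r, c) * v $ c)"
      using Mcar v r by (simp add: scalar_prod_def lessThan_atLeast0)
    also have "\<dots> = M $$ (r, c0) * v $ c0 + (\<Sum>c\<in>{..<d} - {c0}. M $$ (r, c) * v $ c)"
      using c0i i by (subst sum.remove[of _ c0]) auto
    also have "(\<Sum>c\<in>{..<d} - {c0}. M $$ (r, c) * v $ c) = 0"
    proof (rule sum.neutral, rule ballI)
      fix c assume c: "c \<in> {..<d} - {c0}"
      show "M $$ (r, c) * v $ c = 0"
      proof (cases "c < c0")
        case True then show ?thesis using below by simp
      next
        case False
        then have "degree (rp r) < n - d + c" using ds[OF r(1)] r c by auto
        then show ?thesis using Me[OF r(1)] c by (simp add: coeff_eq_0)
      qed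
    qed
    also have "M $$ (r, c0) = 1" using Me[of r c0] r c0i i ds[OF r(1)] lrp[of r] by simp
    finally have "(M *\<^sub>v v) $ r = v $ c0" by simp
    then show False using Mv r c0 by simp
  qed
  have "det M \<noteq> 0" using det_0_iff_vec_prod_zero_field[OF Mcar] inj by auto
  then have rM: "vec_space.rank d M = d" using vec_space.det_rank_iff[OF Mcar] by simp
  have dM: "distinct (cols M)" using vec_space.non_distinct_low_rank[OF Mcar] rM by auto
  note liM = vec_space.full_rank_lin_indpt[OF Mcar rM dM]
  have sub: "set (cols M) \<subseteq> set (cols G)"
  proof
    fix x assume "x \<in> set (cols M)"
    then obtain c where c: "c < d" "x = col M c" using Mcar by (auto simp: in_set_conv_nth)
    have "col M c = col G (n - d + c)"
      by (rule eq_vecI, use c Mcar Gcar Me Geq dn in auto)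
    moreover have "col G (n - d + c) \<in> set (cols G)" using c dn Gcar by (auto simp: in_set_conv_nth intro!: exI[of _ "n - d + c"])
    ultimately show "x \<in> set (cols G)" using c by simp
  qed
  have cardM: "card (set (cols M)) = d" using distinct_card[OF dM] Mcar by simp
  have "d \<le> vec_space.rank d G" using vec_space.rank_ge_card_indpt[OF Gcar sub liM] cardM by simp
  moreover have "vec_space.rank d G \<le> d" using vec_space.rank_le_nr[OF Gcar] .
  ultimately show ?thesis using RS by simp
qed


lemma lin_prod_facts:
  fixes a :: "'a::field"
  shows "lead_coeff (\<Prod>j\<in>A. [:- (a ^ j), 1:]) = 1"
    and "finite A \<Longrightarrow> degree (\<Prod>j\<in>A. [:- (a ^ j), 1:]) = card A"
   apply (subst lead_coeff_prod, simp)
  by (simp add: degree_prod_sum_eq)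

theorem theorem3:
  fixes a :: "'a::{field,finite}" and m n k d :: nat
  assumes "card (UNIV :: 'a set) = 2 ^ m"
    and "primitive_element a"
    and "n \<le> 2 ^ m - 1"
    and "1 \<le> k" and "k \<le> d" and "d \<le> n - 1"
  defines "g \<equiv> (\<Prod>j = 1..n - k. [:- (a ^ j), 1:])"
    and "f \<equiv> (\<Prod>j = 1..n - d. [:- (a ^ j), 1:])"
  defines "G \<equiv> shift_mat g k n @\<^sub>r shift_mat f (d - k) n"
  shows "vec_space.rank d G = d \<and> vec_space.row_space n G = RS_code n f"
proof -
  have dn: "d < n" using assms(4-6) by linarith
  define h where "h = (\<Prod>j = n - d + 1..n - d + (d - k). [:- (a ^ j), 1:])"
  have "n - k = n - d + (d - k)" using dn assms(5) by simp
  then have gfh: "g = f * h" unfolding g_def f_def h_def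
    by (simp only:) (rule prod.ub_add_nat, simp)
  have "lead_coeff f = 1" "lead_coeff h = 1" unfolding f_def h_def by (rule lin_prod_facts)+
  moreover have "degree f = n - d" "degree h = d - k" unfolding f_def h_def
    by (simp_all add: lin_prod_facts)
  ultimately show ?thesis
    using main[of f h n d k] assms(4,5) dn unfolding G_def gfh by blast
qed

end
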